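(* Let $\mathbb K\in\{\mathbb R,\mathbb C\}$ and let $T$ be a norm one symmetric bilinear form on the Hilbert space $\mathbb K^2$ (with its standard inner product) that attains its norm at $(\mathbf{x},\mathbf{y})$, where $\mathbf{x},\mathbf{y}$ are norm one vectors with $\mathbf{x}\nparallel\mathbf{y}$. Then there is an orthonormal basis $F=\{\mathbf{f}_1,\mathbf{f}_2\}$ of $\mathbb K^2$ such that $$[T]_F=\begin{pmatrix}1&0\\0&-1\end{pmatrix}.$$ Consequently, the matrix $[T]_G$ is unitary for every orthonormal basis $G$ of $\mathbb K^2$. Moreover, in the real case the basis $\{\mathbf{f}_1,\mathbf{f}_2\}$ is unique up to signs.
   Context: $\mathbf{x}\parallel\mathbf{y}$ means $\mathbf{x}=\lambda\mathbf{y}$ for some $\lambda\in\mathbb K$, and $\mathbf{x}\nparallel\mathbf{y}$ means this fails. A bilinear form is $\mathbb K$-bilinear (not sesquilinear); its norm is $\|T\|=\sup\{|T(\mathbf{w}_1,\mathbf{w}_2)|:\|\mathbf{w}_1\|,\|\mathbf{w}_2\|\le1\}$, and $T$ attains its norm at $(\mathbf{x},\mathbf{y})$ if $|T(\mathbf{x},\mathbf{y})|=\|T\|$. For a basis $F=\{\mathbf{f}_1,\mathbf{f}_2\}$, $[T]_F$ is the matrix $(T(\mathbf{f}_i,\mathbf{f}_j))_{i,j}$, so $T(\mathbf{w}_1,\mathbf{w}_2)=[\mathbf{w}_1]_F[T]_F[\mathbf{w}_2]_F^t$ with $[\mathbf{w}]_F$ the row coordinate vector of $\mathbf{w}$ in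 $F$. *)

theory Defs
  imports "HOL-Analysis.Analysis"
begin

text \<open>Vectors of K^2 are elements of type K^2 (K = real or complex); the norm on
K^2 is the library's Euclidean (L2) norm, which is the norm of the standard inner product.\<close>

text \<open>K-bilinear (not sesquilinear) forms.\<close>
definition bilin :: "('a::comm_ring_1^'n \<Rightarrow> 'a^'n \<Rightarrow> 'a) \<Rightarrow> bool" where
  "bilin T \<longleftrightarrow>
     (\<forall>x y z. T (x + y) z = T x z + T y z) \<and>
     (\<forall>x y z. T x (y + z) = T x y + T x z) \<and>
     (\<forall>(c::'a) x y. T (c *s x) y = c * T x y) \<and>
     (\<forall>(c::'a) x y. T x (c *s y) = c * T x y)"

definition symmetric_form :: "('a^'n \<Rightarrow> 'a^'n \<Rightarrow> 'a) \<Rightarrow> bool" where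
  "symmetric_form T \<longleftrightarrow> (\<forall>x y. T x y = T y x)"

definition bform_norm :: "('a::real_normed_field^'n \<Rightarrow> 'a^'n \<Rightarrow> 'a) \<Rightarrow> real" where
  "bform_norm T = Sup {norm (T w1 w2) | w1 w2. norm w1 \<le> 1 \<and> norm w2 \<le> 1}"

definition attains_norm_at :: "('a::real_normed_field^'n \<Rightarrow> 'a^'n \<Rightarrow> 'a) \<Rightarrow> 'a^'n \<Rightarrow> 'a^'n \<Rightarrow> bool" where
  "attains_norm_at T x y \<longleftrightarrow> norm (T x y) = bform_norm T"

definition parallel :: "'a::comm_ring_1^'n \<Rightarrow> 'a^'n \<Rightarrow> bool" where
  "parallel x y \<longleftrightarrow> (\<exists>l::'a. x = l *s y)"

text \<open>Standard inner product on K^n; cj is the conjugation of K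
  (identity for K = real, cnj for K = complex).\<close>
definition std_inner :: "('a \<Rightarrow> 'a) \<Rightarrow> 'a::comm_ring_1^'n \<Rightarrow> 'a^'n \<Rightarrow> 'a" where
  "std_inner cj x y = (\<Sum>i\<in>UNIV. x $ i * cj (y $ i))"

definition is_onb :: "('a \<Rightarrow> 'a) \<Rightarrow> ('n \<Rightarrow> 'a::comm_ring_1^'n) \<Rightarrow> bool" where
  "is_onb cj F \<longleftrightarrow>
     (\<forall>i j. std_inner cj (F i) (F j) = (if i = j then 1 else 0)) \<and>
     (\<forall>v. \<exists>c. v = (\<Sum>i\<in>UNIV. c i *s F i))"

definition bmat :: "('a^'n \<Rightarrow> 'a^'n \<Rightarrow> 'a) \<Rightarrow> ('n \<Rightarrow> 'a^'n) \<Rightarrow> 'a^'n^'n" where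
  "bmat T F = (\<chi> i j. T (F i) (F j))"

definition diag_1_m1 :: "'a::comm_ring_1^2^2" where
  "diag_1_m1 = (\<chi> i j. if i = j then (if i = 1 then 1 else -1) else 0)"

definition unitary_mat :: "('a \<Rightarrow> 'a) \<Rightarrow> 'a::comm_ring_1^'n^'n \<Rightarrow> bool" where
  "unitary_mat cj M \<longleftrightarrow> M ** (\<chi> i j. cj (M $ j $ i)) = mat 1"

end

theory Submission imports Defs begin

locale cjf =
  fixes cj :: "'a::real_normed_field \<Rightarrow> 'a"
  assumes cj_add: "cj (a + b) = cj a + cj b"
  and cj_mult: "cj (a * b) = cj a * cj b"
  and cj_cj[simp]: "cj (cj a) = a"
  and cj_of_real[simp]: "cj (of_real r) = of_real r"
  and cj_norm: "a * cj a = of_real ((norm a)^2)"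
begin

lemma cj_0[simp]: "cj 0 = 0" using cj_of_real[of 0] by simp
lemma cj_1[simp]: "cj 1 = 1" using cj_of_real[of 1] by simp
lemma cj_neg[simp]: "cj (- a) = - cj a"
proof -
  have "cj a + cj (-a) = 0" using cj_add[of a "-a"] by simp
  then show ?thesis by (metis minus_unique)
qed
lemma cj_diff: "cj (a - b) = cj a - cj b"
  using cj_add[of a "-b"] by simp
lemma cj_sum: "cj (sum f A) = sum (\<lambda>i. cj (f i)) A"
  by (induction A rule: infinite_finite_induct) (auto simp: cj_add)
lemma cj_eq0[simp]: "cj a = 0 \<longleftrightarrow> a = 0"
  by (metis cj_0 cj_cj)
lemma cj_inverse: "cj (inverse a) = inverse (cj a)"
proof (cases "a = 0")
  case False
  have "cj (inverse a) * cj a = 1" using False by (metis cj_1 cj_mult left_inverse)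
  then show ?thesis by (metis inverse_unique mult.commute)
qed simp

abbreviation hp :: "'a^'n \<Rightarrow> 'a^'n \<Rightarrow> 'a" where "hp \<equiv> std_inner cj"

lemma hp_add_left: "hp (u + v) w = hp u w + hp v w"
  by (simp add: std_inner_def distrib_right sum.distrib)
lemma hp_add_right: "hp w (u + v) = hp w u + hp w v"
  by (simp add: std_inner_def cj_add distrib_left sum.distrib)
lemma hp_diff_left: "hp (u - v) w = hp u w - hp v w"
  by (simp add: std_inner_def left_diff_distrib sum_subtractf)
lemma hp_diff_right: "hp w (u - v) = hp w u - hp w v"
  by (simp add: std_inner_def cj_diff right_diff_distrib sum_subtractf)
lemma hp_scale_left: "hp (c *s u) w = c * hp u w"
  by (simp add: std_inner_def sum_distrib_left mult.assoc)
lemma hp_scale_right: "hp w (c *s u) = cj c * hp w u"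
  by (simp add: std_inner_def sum_distrib_left cj_mult mult_ac)
lemma hp_neg_left: "hp (- u) w = - hp u w"
  by (simp add: std_inner_def sum_negf)
lemma hp_neg_right: "hp w (- u) = - hp w u"
  by (simp add: std_inner_def sum_negf)
lemma hp_sym: "hp v u = cj (hp u v)"
  by (simp add: std_inner_def cj_sum cj_mult mult.commute)
lemma hp_zero_left[simp]: "hp 0 u = 0" by (simp add: std_inner_def)
lemma hp_zero_right[simp]: "hp u 0 = 0" by (simp add: std_inner_def)

lemmas hp_simps = hp_add_left hp_add_right hp_diff_left hp_diff_right hp_scale_left hp_scale_right
  hp_neg_left hp_neg_right

lemma norm_sq_vec: "(norm (u::'a^'n))^2 = (\<Sum>i\<in>UNIV. (norm (u$i))^2)"
  unfolding norm_vec_def L2_set_def by (simp add: sum_nonneg)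

lemma hp_self: "hp u u = of_real ((norm u)^2)"
  by (simp add: std_inner_def norm_sq_vec cj_norm)

lemma hp_self_0: "hp u u = 0 \<longleftrightarrow> u = 0"
  by (simp add: hp_self)


lemma hp_sum_right: "hp w (sum f A) = sum (\<lambda>j. hp w (f j)) A"
  by (induction A rule: infinite_finite_induct) (auto simp: hp_add_right)

lemma onb_expand:
  fixes F :: "'n::finite \<Rightarrow> 'a^'n"
  assumes on: "\<forall>i j. hp (F i) (F j) = (if i = j then 1 else 0)"
  shows "v = (\<Sum>i\<in>UNIV. hp v (F i) *s F i)"
proof -
  define U :: "'a^'n^'n" where "U = (\<chi> i k. F i $ k)"
  define U' :: "'a^'n^'n" where "U' = (\<chi> k i. cj (F i $ k))"
  have "U ** U' = mat 1"
    using on by (simp add: U_def U'_def matrix_matrix_mult_def mat_def vec_eq_iff std_inner_def)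
  then have "U' ** U = mat 1" using matrix_left_right_inverse by blast
  then have d: "\<And>k l. (\<Sum>i\<in>UNIV. cj (F i $ k) * F i $ l) = (if k = l then 1 else 0)"
    by (simp add: U_def U'_def matrix_matrix_mult_def mat_def vec_eq_iff)
  show ?thesis
  proof (subst vec_eq_iff, intro allI)
    fix l
    have "(\<Sum>i\<in>UNIV. hp v (F i) *s F i) $ l = (\<Sum>i\<in>UNIV. (\<Sum>k\<in>UNIV. v$k * cj (F i $ k)) * F i $ l)"
      by (simp add: std_inner_def)
    also have "\<dots> = (\<Sum>k\<in>UNIV. v$k * (\<Sum>i\<in>UNIV. cj (F i $ k) * F i $ l))"
      apply (simp add: sum_distrib_left sum_distrib_right mult.assoc)
      apply (rule sum.swap)
      done
    also have "\<dots> = v $ l" by (simp add: d if_distrib cong: if_cong)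
    finally show "v $ l = (\<Sum>i\<in>UNIV. hp v (F i) *s F i) $ l" by simp
  qed
qed

lemma parseval:
  fixes G :: "'n::finite \<Rightarrow> 'a^'n"
  assumes on: "\<forall>i j. hp (G i) (G j) = (if i = j then 1 else 0)"
  shows "hp p q = (\<Sum>j\<in>UNIV. hp p (G j) * cj (hp q (G j)))"
proof -
  have "hp p q = hp p (\<Sum>j\<in>UNIV. hp q (G j) *s G j)"
    using onb_expand[OF on, of q] by simp
  also have "\<dots> = (\<Sum>j\<in>UNIV. hp p (G j) * cj (hp q (G j)))"
    by (simp add: hp_sum_right hp_scale_right mult.commute)
  finally show ?thesis .
qed

lemma bilin_simps:
  assumes "bilin T"
  shows "T (x + y) z = T x z + T y z" "T x (y + z) = T x y + T x z"
    "T (c *s x) y = c * T x y" "T x (c *s y) = c * T x y"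
  using assms unfolding bilin_def by blast+

definition Bop :: "('a^2 \<Rightarrow> 'a^2 \<Rightarrow> 'a) \<Rightarrow> 'a^2 \<Rightarrow> 'a^2" where
  "Bop T v = (\<chi> i. cj (T (axis i 1) v))"

lemma vec2_expand: "(u::'a^2) = u$1 *s axis 1 1 + u$2 *s axis 2 1"
  using basis_expansion[of u] by (simp add: sum_2)

lemma T_left: fixes u v :: "'a^2" assumes "bilin T"
  shows "T u v = u$1 * T (axis 1 1) v + u$2 * T (axis 2 1) v"
proof -
  have e: "T u v = T (u$1 *s axis 1 1 + u$2 *s axis 2 1) v"
    by (rule arg_cong[where f="\<lambda>w. T w v"], rule vec2_expand)
  show ?thesis unfolding e by (simp add: bilin_simps[OF assms])
qed

lemma T_right: fixes u v :: "'a^2" assumes "bilin T"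
  shows "T u v = v$1 * T u (axis 1 1) + v$2 * T u (axis 2 1)"
proof -
  have e: "T u v = T u (v$1 *s axis 1 1 + v$2 *s axis 2 1)"
    by (rule arg_cong[where f="\<lambda>w. T u w"], rule vec2_expand)
  show ?thesis unfolding e by (simp add: bilin_simps[OF assms])
qed

lemma T_hp: fixes u v :: "'a^2" assumes "bilin T" shows "T u v = hp u (Bop T v)"
  unfolding T_left[OF assms, of u v] by (simp add: Bop_def std_inner_def sum_2)

lemma Bop_add: assumes "bilin T" shows "Bop T (u + v) = Bop T u + Bop T v"
  by (simp add: Bop_def vec_eq_iff bilin_simps[OF assms] cj_add)

lemma Bop_scale: assumes "bilin T" shows "Bop T (c *s u) = cj c *s Bop T u"
  by (simp add: Bop_def vec_eq_iff bilin_simps[OF assms] cj_mult)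

lemma Bop_neg: assumes "bilin T" shows "Bop T (- u) = - Bop T u"
  using Bop_scale[OF assms, of "-1" u] by simp

lemma Bop_diff: assumes "bilin T" shows "Bop T (u - v) = Bop T u - Bop T v"
  using Bop_add[OF assms, of u "-v"] Bop_neg[OF assms, of v] by simp

lemma norm_ofreal_scale: "norm (of_real r *s (x::'a^'n)) = \<bar>r\<bar> * norm x"
proof -
  have "of_real r *s x = r *\<^sub>R x" by (simp add: vec_eq_iff) (simp add: scaleR_conv_of_real)
  then show ?thesis by simp
qed

lemma norm_mle: "norm a \<le> 1 \<Longrightarrow> norm (a * b) \<le> norm (b::'a)"
  by (simp add: norm_mult mult_left_le_one_le)

lemma norm2_bound:
  fixes a b c p q :: 'a
  assumes "norm a \<le> 1" "norm b \<le> 1" "norm c \<le> 1"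
  shows "norm (a * (b * p + c * q)) \<le> norm p + norm q"
proof -
  have "norm (a * (b * p + c * q)) \<le> norm (b * p + c * q)" using assms(1) by (rule norm_mle)
  also have "\<dots> \<le> norm (b * p) + norm (c * q)" by (rule norm_triangle_ineq)
  also have "\<dots> \<le> norm p + norm q" using assms by (intro add_mono norm_mle)
  finally show ?thesis .
qed

lemma norm4_bound:
  fixes a b c d p q r s :: 'a
  assumes "norm a \<le> 1" "norm b \<le> 1" "norm c \<le> 1" "norm d \<le> 1"
  shows "norm (a * (b * p + c * q) + d * (b * r + c * s)) \<le> norm p + norm q + norm r + norm s"
proof -
  have "norm (a * (b * p + c * q) + d * (b * r + c * s)) \<le> norm (a * (b * p + c * q)) + norm (d * (b * r + c * s))"
    by (rule norm_triangle_ineq)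
  also have "\<dots> \<le> (norm p + norm q) + (norm r + norm s)"
    using assms by (intro add_mono norm2_bound)
  finally show ?thesis by simp
qed

lemma T_bound:
  fixes u v :: "'a^2"
  assumes b: "bilin T" and n: "bform_norm T = 1" and u: "norm u \<le> 1" and v: "norm v \<le> 1"
  shows "norm (T u v) \<le> 1"
proof -
  define K where "K = norm (T (axis 1 1) (axis 1 1)) + norm (T (axis 1 1) (axis 2 1))
     + norm (T (axis 2 1) (axis 1 1)) + norm (T (axis 2 1) (axis 2 1))"
  have exp: "T w1 w2 = w1$1 * (w2$1 * T (axis 1 1) (axis 1 1) + w2$2 * T (axis 1 1) (axis 2 1))
     + w1$2 * (w2$1 * T (axis 2 1) (axis 1 1) + w2$2 * T (axis 2 1) (axis 2 1))" for w1 w2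
    unfolding T_left[OF b, of w1 w2] T_right[OF b, of "axis 1 1" w2] T_right[OF b, of "axis 2 1" w2] ..
  have le1: "norm (w$i) \<le> 1" if "norm w \<le> 1" for w :: "'a^2" and i
    by (rule order_trans[OF Finite_Cartesian_Product.norm_nth_le that])
  have "norm (T w1 w2) \<le> K" if "norm w1 \<le> 1" "norm w2 \<le> 1" for w1 w2
    unfolding exp[of w1 w2] K_def by (rule norm4_bound) (use le1 that in auto)
  then have bdd: "bdd_above {norm (T w1 w2) | w1 w2. norm w1 \<le> 1 \<and> norm w2 \<le> 1}"
    by (intro bdd_aboveI[of _ K]) auto
  have "norm (T u v) \<le> bform_norm T" unfolding bform_norm_def
    by (rule cSup_upper[OF _ bdd]) (use u v in auto)
  then show ?thesis using n by simp
qed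

lemma Bop_bound:
  assumes b: "bilin T" and n: "bform_norm T = 1" and v: "norm v \<le> 1"
  shows "norm (Bop T v) \<le> 1"
proof (cases "Bop T v = 0")
  case False
  define w where "w = Bop T v"
  have wp: "norm w > 0" using False w_def by simp
  define u where "u = of_real (1 / norm w) *s w"
  have nu: "norm u = 1" unfolding u_def norm_ofreal_scale using wp by simp
  have "T u v = hp u w" by (simp add: T_hp[OF b] w_def)
  also have "\<dots> = of_real (1 / norm w) * of_real ((norm w)^2)"
    by (simp add: u_def hp_scale_left hp_self)
  also have "\<dots> = of_real (1 / norm w * (norm w)^2)" by (simp only: of_real_mult)
  also have "\<dots> = of_real (norm w)" using wp by (simp add: power2_eq_square)
  finally have "norm (T u v) = norm w" by simp
  moreover have "norm (T u v) \<le> 1" using T_bound[OF b n _ v] nu by simp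
  ultimately show ?thesis using w_def by simp
qed simp

lemma cs_eq:
  assumes u: "norm u = 1" and w: "norm w \<le> 1" and h: "norm (hp u w) = 1"
  shows "w = cj (hp u w) *s u"
proof -
  define l where "l = hp u w"
  define d where "d = w - cj l *s u"
  have ll: "l * cj l = 1" using cj_norm[of l] h l_def by simp
  have ll': "cj l * l = 1" using ll by (simp add: mult.commute)
  have "hp d d = hp w w - l * hp w u - cj l * hp u w + cj l * l * hp u u"
    by (simp add: d_def hp_simps algebra_simps)
  also have "\<dots> = hp w w - 1"
    using ll ll' u by (simp add: l_def[symmetric] hp_sym[of w u] hp_self)
  also have "\<dots> = of_real ((norm w)^2 - 1)" by (simp add: hp_self)
  finally have "(of_real ((norm d)^2) :: 'a) = of_real ((norm w)^2 - 1)" by (simp only: hp_self)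
  then have "(norm d)^2 = (norm w)^2 - 1" by (simp only: of_real_eq_iff)
  moreover have "(norm w)^2 \<le> 1" using w by (simp add: power_le_one)
  ultimately have "d = 0" by (smt (verit) zero_less_power2 norm_eq_zero)
  then show ?thesis by (simp add: d_def l_def)
qed


lemma attain:
  fixes T :: "'a^2 \<Rightarrow> 'a^2 \<Rightarrow> 'a" and x y :: "'a^2"
  assumes b: "bilin T" and s: "symmetric_form T" and n: "bform_norm T = 1"
    and x: "norm x = 1" and y: "norm y = 1" and a: "attains_norm_at T x y"
  shows "norm (T x y) = 1" "Bop T y = cj (T x y) *s x" "Bop T x = cj (T x y) *s y"
proof -
  show n1: "norm (T x y) = 1" using a n by (simp add: attains_norm_at_def)
  have "Bop T y = cj (hp x (Bop T y)) *s x"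
    by (rule cs_eq[OF x Bop_bound[OF b n]]) (use y n1 T_hp[OF b, of x y] in auto)
  then show "Bop T y = cj (T x y) *s x" by (simp add: T_hp[OF b, of x y])
  have tyx: "T y x = T x y" using s by (simp add: symmetric_form_def)
  have "Bop T x = cj (hp y (Bop T x)) *s y"
    by (rule cs_eq[OF y Bop_bound[OF b n]]) (use x n1 tyx T_hp[OF b, of y x] in auto)
  then show "Bop T x = cj (T x y) *s y" by (simp add: tyx[symmetric] T_hp[OF b, of y x])
qed

lemma normalize_fixed:
  fixes T :: "'a^2 \<Rightarrow> 'a^2 \<Rightarrow> 'a" and f :: "'a^2" and s :: 'a
  assumes b: "bilin T" and f: "f \<noteq> 0" and B: "Bop T f = s *s f"
  defines "e \<equiv> of_real (1 / norm f) *s f"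
  shows "hp e e = 1" "Bop T e = s *s e"
proof -
  have np: "norm f > 0" using f by simp
  have "hp e e = of_real (1 / norm f) * (of_real (1 / norm f) * hp f f)"
    by (simp only: e_def hp_scale_left hp_scale_right cj_of_real)
  also have "\<dots> = of_real (1 / norm f) * of_real (1 / norm f) * of_real ((norm f)^2)"
    by (simp only: hp_self mult.assoc)
  also have "\<dots> = of_real (1 / norm f * (1 / norm f) * (norm f)^2)" by (simp only: of_real_mult)
  also have "\<dots> = 1" using np by (simp add: power2_eq_square)
  finally show "hp e e = 1" .
  show "Bop T e = s *s e" by (simp only: e_def Bop_scale[OF b] B cj_of_real vector_smult_assoc mult.commute)
qed

lemma from_fixed:
  fixes T :: "'a^2 \<Rightarrow> 'a^2 \<Rightarrow> 'a" and f1 f2 :: "'a^2"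
  assumes b: "bilin T" and f1: "f1 \<noteq> 0" and f2: "f2 \<noteq> 0"
    and B1: "Bop T f1 = f1" and B2: "Bop T f2 = - f2" and o: "hp f1 f2 = 0"
  shows "\<exists>e1 e2. hp e1 e1 = 1 \<and> hp e2 e2 = 1 \<and> hp e1 e2 = 0 \<and>
     T e1 e1 = 1 \<and> T e2 e2 = -1 \<and> T e1 e2 = 0"
proof -
  define e1 where "e1 = of_real (1 / norm f1) *s f1"
  define e2 where "e2 = of_real (1 / norm f2) *s f2"
  have B1': "Bop T f1 = 1 *s f1" using B1 by simp
  have B2': "Bop T f2 = (-1) *s f2" using B2 by simp
  note n1 = normalize_fixed[OF b f1 B1', folded e1_def]
  note n2 = normalize_fixed[OF b f2 B2', folded e2_def]
  have o': "hp e1 e2 = 0" by (simp add: e1_def e2_def hp_scale_left hp_scale_right o)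
  have "T e1 e1 = 1" using n1 by (simp add: T_hp[OF b])
  moreover have "T e2 e2 = -1" using n2 by (simp add: T_hp[OF b] hp_neg_right)
  moreover have "T e1 e2 = 0" using n2 o' by (simp add: T_hp[OF b] hp_neg_right)
  ultimately show ?thesis using n1 n2 o' by blast
qed

lemma ring4:
  fixes ai bi ck dk a1 a2 b1 b2 c1 c2 d1 d2 :: 'a
  shows "(ai*a1 - bi*b1)*(ck*c1 - dk*d1) + (ai*a2 - bi*b2)*(ck*c2 - dk*d2) =
    ai*ck*(a1*c1 + a2*c2) - ai*dk*(a1*d1+a2*d2) - bi*ck*(b1*c1+b2*c2) + bi*dk*(b1*d1+b2*d2)"
  by (simp add: algebra_simps)

lemma finish:
  fixes T :: "'a^2 \<Rightarrow> 'a^2 \<Rightarrow> 'a" and e1 e2 :: "'a^2"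
  assumes b: "bilin T" and s: "symmetric_form T"
    and h11: "hp e1 e1 = 1" and h22: "hp e2 e2 = 1" and h12: "hp e1 e2 = 0"
    and t11: "T e1 e1 = 1" and t22: "T e2 e2 = -1" and t12: "T e1 e2 = 0"
  defines "F \<equiv> (\<lambda>i::2. if i = 1 then e1 else e2)"
  shows "is_onb cj F" "bmat T F = diag_1_m1"
    "\<forall>G. is_onb cj G \<longrightarrow> unitary_mat cj (bmat T G)"
    "\<forall>u v. T u v = hp u e1 * hp v e1 - hp u e2 * hp v e2"
proof -
  have h21: "hp e2 e1 = 0" using h12 by (simp add: hp_sym[of e2 e1])
  have t21: "T e2 e1 = 0" using t12 s by (simp add: symmetric_form_def)
  have F1: "F 1 = e1" and F2: "F 2 = e2" by (simp_all add: F_def)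
  have onF: "\<forall>i j. hp (F i) (F j) = (if i = j then 1 else 0)"
  proof (intro allI)
    fix i j :: 2
    show "hp (F i) (F j) = (if i = j then 1 else 0)"
      using exhaust_2[of i] exhaust_2[of j] by (auto simp: F1 F2 h11 h22 h12 h21)
  qed
  show "is_onb cj F" unfolding is_onb_def
  proof (intro conjI onF allI)
    fix v show "\<exists>c. v = (\<Sum>i\<in>UNIV. c i *s F i)"
      by (rule exI[of _ "\<lambda>i. hp v (F i)"], rule onb_expand[OF onF])
  qed
  have exp2: "w = hp w e1 *s e1 + hp w e2 *s e2" for w
    using onb_expand[OF onF, of w] by (simp add: sum_2 F1 F2)
  have Tf: "T u v = hp u e1 * hp v e1 - hp u e2 * hp v e2" for u v
  proof -
    define a where "a = hp u e1"
    define b' where "b' = hp u e2"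
    define c where "c = hp v e1"
    define d where "d = hp v e2"
    have eu: "u = a *s e1 + b' *s e2" unfolding a_def b'_def by (rule exp2)
    have ev: "v = c *s e1 + d *s e2" unfolding c_def d_def by (rule exp2)
    have "T u v = T (a *s e1 + b' *s e2) (c *s e1 + d *s e2)" using eu ev by simp
    also have "\<dots> = a * c - b' * d"
      by (simp add: bilin_simps[OF b] t11 t22 t12 t21)
    finally show ?thesis by (simp add: a_def b'_def c_def d_def)
  qed
  then show "\<forall>u v. T u v = hp u e1 * hp v e1 - hp u e2 * hp v e2" by blast
  show "bmat T F = diag_1_m1"
    unfolding bmat_def diag_1_m1_def vec_eq_iff
  proof (intro allI)
    fix i j :: 2
    show "(\<chi> i j. T (F i) (F j)) $ i $ j = (\<chi> i j. if i = j then if i = 1 then 1 else - 1 else 0) $ i $ j"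
      using exhaust_2[of i] exhaust_2[of j] by (auto simp: F1 F2 t11 t22 t12 t21)
  qed
  show "\<forall>G. is_onb cj G \<longrightarrow> unitary_mat cj (bmat T G)"
  proof (intro allI impI)
    fix G :: "2 \<Rightarrow> 'a^2"
    assume "is_onb cj G"
    then have onG: "\<forall>i j. hp (G i) (G j) = (if i = j then 1 else 0)" by (simp add: is_onb_def)
    have S: "hp (G 1) p * cj (hp (G 1) q) + hp (G 2) p * cj (hp (G 2) q) = hp q p" for p q
    proof -
      have "hp q p = hp q (G 1) * cj (hp p (G 1)) + hp q (G 2) * cj (hp p (G 2))"
        using parseval[OF onG, of q p] by (simp add: sum_2)
      then show ?thesis by (simp add: hp_sym[of "G 1"] hp_sym[of "G 2"] mult.commute)
    qed
    have PF: "hp (G i) e1 * cj (hp (G k) e1) + hp (G i) e2 * cj (hp (G k) e2) = hp (G i) (G k)" for i k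
      using parseval[OF onF, of "G i" "G k"] by (simp add: sum_2 F1 F2)
    show "unitary_mat cj (bmat T G)"
      unfolding unitary_mat_def bmat_def
    proof (subst vec_eq_iff, intro allI, subst vec_eq_iff, intro allI)
      fix i k :: 2
      have "((\<chi> i j. T (G i) (G j)) ** (\<chi> i j. cj ((\<chi> i j. T (G i) (G j)) $ j $ i))) $ i $ k
        = (\<Sum>j\<in>UNIV. T (G i) (G j) * cj (T (G k) (G j)))"
        by (simp add: matrix_matrix_mult_def)
      also have "\<dots> = (hp (G i) e1 * hp (G 1) e1 - hp (G i) e2 * hp (G 1) e2) *
            (cj (hp (G k) e1) * cj (hp (G 1) e1) - cj (hp (G k) e2) * cj (hp (G 1) e2)) +
          (hp (G i) e1 * hp (G 2) e1 - hp (G i) e2 * hp (G 2) e2) *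
            (cj (hp (G k) e1) * cj (hp (G 2) e1) - cj (hp (G k) e2) * cj (hp (G 2) e2))"
        by (simp add: sum_2 Tf cj_diff cj_mult)
      also have "\<dots> = hp (G i) e1 * cj (hp (G k) e1) * hp e1 e1 - hp (G i) e1 * cj (hp (G k) e2) * hp e2 e1
           - hp (G i) e2 * cj (hp (G k) e1) * hp e1 e2 + hp (G i) e2 * cj (hp (G k) e2) * hp e2 e2"
        by (simp only: ring4 S)
      also have "\<dots> = hp (G i) (G k)" using PF[of i k] by (simp add: h11 h22 h12 h21)
      also have "\<dots> = mat 1 $ i $ k" using onG by (simp add: mat_def)
      finally show "((\<chi> i j. T (G i) (G j)) ** (\<chi> i j. cj ((\<chi> i j. T (G i) (G j)) $ j $ i))) $ i $ k
        = mat 1 $ i $ k" .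
    qed
  qed
qed


end

interpretation R: cjf "id :: real \<Rightarrow> real"
  by unfold_locales (auto simp: power2_eq_square)

interpretation C: cjf cnj
proof unfold_locales
  fix a :: complex
  show "a * cnj a = of_real ((norm a)^2)" by (simp only: complex_norm_square)
qed auto

lemma real_case:
  fixes T :: "real^2 \<Rightarrow> real^2 \<Rightarrow> real" and x y :: "real^2"
  assumes b: "bilin T" and s: "symmetric_form T" and n: "bform_norm T = 1"
    and x: "norm x = 1" and y: "norm y = 1" and np: "\<not> parallel x y" and a: "attains_norm_at T x y"
  shows "\<exists>F. is_onb id F \<and> bmat T F = diag_1_m1 \<and>
         (\<forall>G. is_onb id G \<longrightarrow> unitary_mat id (bmat T G)) \<and>
         (\<forall>F'. is_onb id F' \<and> bmat T F' = diag_1_m1 \<longrightarrow>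
             (F' 1 = F 1 \<or> F' 1 = - F 1) \<and> (F' 2 = F 2 \<or> F' 2 = - F 2))"
proof -
  define l where "l = T x y"
  note at = R.attain[OF b s n x y a, folded l_def]
  have l1: "\<bar>l\<bar> = 1" using at(1) by simp
  have l2: "l * l = 1" by (metis l1 abs_mult_self_eq mult_1_left)
  have By: "R.Bop T y = l *s x" and Bx: "R.Bop T x = l *s y" using at by simp_all
  have hxx: "R.hp x x = 1" using x by (simp add: R.hp_self)
  have hyy: "R.hp y y = 1" using y by (simp add: R.hp_self)
  have hyx: "R.hp y x = R.hp x y" by (simp add: R.hp_sym[of y x])
  define f1 where "f1 = x + l *s y"
  define f2 where "f2 = x - l *s y"
  have B1: "R.Bop T f1 = f1"
  proof -
    have "R.Bop T f1 = l *s y + (l * l) *s x" by (simp add: f1_def R.Bop_add[OF b] R.Bop_scale[OF b] By Bx)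
    then show ?thesis using l2 by (simp add: f1_def)
  qed
  have B2: "R.Bop T f2 = - f2"
  proof -
    have "R.Bop T f2 = l *s y - (l * l) *s x" by (simp add: f2_def R.Bop_diff[OF b] R.Bop_scale[OF b] By Bx)
    then show ?thesis using l2 by (simp add: f2_def)
  qed
  have nz1: "f1 \<noteq> 0"
  proof
    assume "f1 = 0"
    then have "x = (- l) *s y" by (simp add: f1_def eq_neg_iff_add_eq_0)
    then show False using np unfolding parallel_def by blast
  qed
  have nz2: "f2 \<noteq> 0"
  proof
    assume "f2 = 0"
    then have "x = l *s y" by (simp add: f2_def)
    then show False using np unfolding parallel_def by blast
  qed
  have o: "R.hp f1 f2 = 0"
  proof -
    have "R.hp f1 f2 = R.hp x x - l * R.hp x y + l * R.hp y x - (l * l) * R.hp y y"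
      by (simp add: f1_def f2_def R.hp_simps algebra_simps)
    then show ?thesis using hxx hyy hyx l2 by simp
  qed
  obtain e1 e2 where e: "R.hp e1 e1 = 1" "R.hp e2 e2 = 1" "R.hp e1 e2 = 0"
     "T e1 e1 = 1" "T e2 e2 = -1" "T e1 e2 = 0"
    using R.from_fixed[OF b nz1 nz2 B1 B2 o] by blast
  define F where "F = (\<lambda>i::2. if i = 1 then e1 else e2)"
  note fin = R.finish[OF b s e, folded F_def]
  have F1: "F 1 = e1" and F2: "F 2 = e2" by (simp_all add: F_def)
  have onF: "\<forall>i j. R.hp (F i) (F j) = (if i = j then 1 else 0)" using fin(1) by (simp add: is_onb_def)
  have uniq: "u = F k \<or> u = - F k"
    if hu: "R.hp u u = 1" and tu: "T u u = (if k = 1 then 1 else -1)" for u k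
  proof -
    define p where "p = R.hp u e1"
    define q where "q = R.hp u e2"
    have eu: "u = p *s e1 + q *s e2"
      using R.onb_expand[OF onF, of u] by (simp add: sum_2 F1 F2 p_def q_def)
    have s1: "p * p + q * q = 1"
      using R.parseval[OF onF, of u u] hu by (simp add: sum_2 F1 F2 p_def q_def)
    have s2: "p * p - q * q = (if k = 1 then 1 else -1)"
      using fin(4) tu by (simp add: p_def q_def)
    show ?thesis
    proof (cases "k = 1")
      case True
      then have s2': "p * p - q * q = 1" using s2 by simp
      have "q * q = 0" "p * p = 1" using s1 s2' by linarith+
      then have "q = 0" "p = 1 \<or> p = -1" by (simp_all add: square_eq_1_iff)
      then show ?thesis using eu True F1 by auto
    next
      case False
      then have k2: "k = 2" using exhaust_2[of k] by auto
      from False have s2': "p * p - q * q = -1" using s2 by simp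
      have "p * p = 0" "q * q = 1" using s1 s2' by linarith+
      then have "p = 0" "q = 1 \<or> q = -1" by (simp_all add: square_eq_1_iff)
      then show ?thesis using eu k2 F2 by auto
    qed
  qed
  show ?thesis
  proof (intro exI[of _ F] conjI allI impI)
    show "is_onb id F" "bmat T F = diag_1_m1" by (fact fin(1), fact fin(2))
    show "\<And>G. is_onb id G \<Longrightarrow> unitary_mat id (bmat T G)" using fin(3) by blast
    fix F' assume h: "is_onb id F' \<and> bmat T F' = diag_1_m1"
    then have on': "R.hp (F' i) (F' i) = 1" for i by (simp add: is_onb_def)
    have "bmat T F' $ i $ i = diag_1_m1 $ i $ i" for i using h by simp
    then have t': "T (F' i) (F' i) = (if i = 1 then 1 else -1)" for i
      by (simp add: bmat_def diag_1_m1_def)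
    show "F' 1 = F 1 \<or> F' 1 = - F 1" using uniq[OF on' t'] .
    show "F' 2 = F 2 \<or> F' 2 = - F 2" using uniq[OF on' t'] .
  qed
qed


lemma complex_case:
  fixes T :: "complex^2 \<Rightarrow> complex^2 \<Rightarrow> complex" and x y :: "complex^2"
  assumes b: "bilin T" and s: "symmetric_form T" and n: "bform_norm T = 1"
    and x: "norm x = 1" and y: "norm y = 1" and np: "\<not> parallel x y" and a: "attains_norm_at T x y"
  shows "\<exists>F. is_onb cnj F \<and> bmat T F = diag_1_m1 \<and>
         (\<forall>G. is_onb cnj G \<longrightarrow> unitary_mat cnj (bmat T G))"
proof -
  define l where "l = T x y"
  note at = C.attain[OF b s n x y a, folded l_def]
  have By: "C.Bop T y = cnj l *s x" and Bx: "C.Bop T x = cnj l *s y" using at by simp_all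
  have hxx: "C.hp x x = 1" using x by (simp add: C.hp_self)
  have hyy: "C.hp y y = 1" using y by (simp add: C.hp_self)
  define r where "r = C.hp x y"
  have hyx: "C.hp y x = cnj r" by (simp add: C.hp_sym[of y x] r_def)
  define m where "m = csqrt (cnj l)"
  have m2: "m * m = cnj l" using power2_csqrt[of "cnj l"] by (simp add: m_def power2_eq_square)
  have nm: "norm m = 1" using at(1) by (simp add: m_def)
  have mm: "cnj m * m = 1"
    using complex_norm_square[of m] nm by (simp add: mult.commute)
  have ml: "cnj m * cnj l = m" using mm m2
    by (metis mult.assoc mult_1_left)
  define al where "al = (if r = 0 then 1 else csqrt (cnj r / of_real (norm r)))"
  have nal: "norm al = 1" by (simp add: al_def norm_divide)
  have aa: "cnj al * al = 1"
    using complex_norm_square[of al] nal by (simp add: mult.commute)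
  have areal: "cnj al * cnj al * cnj r = al * al * r"
  proof (cases "r = 0")
    case False
    have "al * al = cnj r / of_real (norm r)"
      using power2_csqrt[of "cnj r / of_real (norm r)"] False by (simp add: al_def power2_eq_square)
    have e0: "r * cnj r = of_real ((norm r)^2)" by (simp only: complex_norm_square)
    have "al * al * r = (r * cnj r) / of_real (norm r)"
      using \<open>al * al = _\<close> by (simp add: mult.commute)
    then have "al * al * r = of_real ((norm r)^2) / of_real (norm r)"
      by (simp only: e0)
    then have e: "al * al * r = of_real (norm r)" using False by (simp add: power2_eq_square)
    have "cnj (al * al * r) = al * al * r" by (simp only: e complex_cnj_complex_of_real)
    then show ?thesis by simp
  qed simp
  define f1 where "f1 = m *s (al *s x + cnj al *s y)"
  define f2 where "f2 = m *s (al *s x - cnj al *s y)"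
  have B1: "C.Bop T f1 = f1"
  proof -
    have "C.Bop T f1 = cnj m *s (cnj al *s (cnj l *s y) + al *s (cnj l *s x))"
      by (simp add: f1_def C.Bop_add[OF b] C.Bop_scale[OF b] By Bx mult.assoc)
    also have "\<dots> = (cnj m * cnj l) *s (al *s x + cnj al *s y)"
      by (simp add: vec_eq_iff algebra_simps)
    finally show ?thesis by (simp add: ml f1_def)
  qed
  have B2: "C.Bop T f2 = - f2"
  proof -
    have "C.Bop T f2 = cnj m *s (cnj al *s (cnj l *s y) - al *s (cnj l *s x))"
      by (simp add: f2_def C.Bop_diff[OF b] C.Bop_scale[OF b] By Bx mult.assoc)
    also have "\<dots> = - ((cnj m * cnj l) *s (al *s x - cnj al *s y))"
      by (simp add: vec_eq_iff algebra_simps)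
    finally show ?thesis by (simp add: ml f2_def)
  qed
  have m0: "m \<noteq> 0" using nm by auto
  have al0: "al \<noteq> 0" using nal by auto
  have nz1: "f1 \<noteq> 0"
  proof
    assume "f1 = 0"
    moreover have "al *s x + cnj al *s y = inverse m *s f1" using m0 by (simp add: f1_def mult.assoc[symmetric])
    ultimately have "al *s x + cnj al *s y = 0" by simp
    then have "x = (- cnj al / al) *s y" using al0
      by (simp add: vec_eq_iff field_simps add_eq_0_iff2)
    then show False using np unfolding parallel_def by blast
  qed
  have nz2: "f2 \<noteq> 0"
  proof
    assume "f2 = 0"
    moreover have "al *s x - cnj al *s y = inverse m *s f2" using m0 by (simp add: f2_def mult.assoc[symmetric])
    ultimately have "al *s x - cnj al *s y = 0" by simp
    then have "x = (cnj al / al) *s y" using al0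
      by (simp add: vec_eq_iff field_simps)
    then show False using np unfolding parallel_def by blast
  qed
  have o: "C.hp f1 f2 = 0"
  proof -
    have "C.hp f1 f2 = m * cnj m * (al * cnj al * C.hp x x - al * al * C.hp x y
        + cnj al * cnj al * C.hp y x - cnj al * al * C.hp y y)"
      by (simp add: f1_def f2_def C.hp_simps algebra_simps)
    also have "\<dots> = 0" using hxx hyy hyx areal by (simp add: r_def mult.commute)
    finally show ?thesis .
  qed
  obtain e1 e2 where e: "C.hp e1 e1 = 1" "C.hp e2 e2 = 1" "C.hp e1 e2 = 0"
     "T e1 e1 = 1" "T e2 e2 = -1" "T e1 e2 = 0"
    using C.from_fixed[OF b nz1 nz2 B1 B2 o] by blast
  note fin = C.finish[OF b s e]
  show ?thesis using fin(1-3) by blast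
qed

theorem lemma2p1:
  shows
  "(\<forall>(T :: real^2 \<Rightarrow> real^2 \<Rightarrow> real) x y.
      bilin T \<and> symmetric_form T \<and> bform_norm T = 1 \<and>
      norm x = 1 \<and> norm y = 1 \<and> \<not> parallel x y \<and> attains_norm_at T x y \<longrightarrow>
      (\<exists>F. is_onb id F \<and> bmat T F = diag_1_m1 \<and>
         (\<forall>G. is_onb id G \<longrightarrow> unitary_mat id (bmat T G)) \<and>
         (\<forall>F'. is_onb id F' \<and> bmat T F' = diag_1_m1 \<longrightarrow>
             (F' 1 = F 1 \<or> F' 1 = - F 1) \<and> (F' 2 = F 2 \<or> F' 2 = - F 2))))
   \<and>
   (\<forall>(T :: complex^2 \<Rightarrow> complex^2 \<Rightarrow> complex) x y.
      bilin T \<and> symmetric_form T \<and> bform_norm T = 1 \<and>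
      norm x = 1 \<and> norm y = 1 \<and> \<not> parallel x y \<and> attains_norm_at T x y \<longrightarrow>
      (\<exists>F. is_onb cnj F \<and> bmat T F = diag_1_m1 \<and>
         (\<forall>G. is_onb cnj G \<longrightarrow> unitary_mat cnj (bmat T G))))"
proof (intro conjI allI impI)
  fix T :: "real^2 \<Rightarrow> real^2 \<Rightarrow> real" and x y
  assume h: "bilin T \<and> symmetric_form T \<and> bform_norm T = 1 \<and>
      norm x = 1 \<and> norm y = 1 \<and> \<not> parallel x y \<and> attains_norm_at T x y"
  show "\<exists>F. is_onb id F \<and> bmat T F = diag_1_m1 \<and>
         (\<forall>G. is_onb id G \<longrightarrow> unitary_mat id (bmat T G)) \<and>
         (\<forall>F'. is_onb id F' \<and> bmat T F' = diag_1_m1 \<longrightarrow>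
             (F' 1 = F 1 \<or> F' 1 = - F 1) \<and> (F' 2 = F 2 \<or> F' 2 = - F 2))"
    using h real_case by blast
next
  fix T :: "complex^2 \<Rightarrow> complex^2 \<Rightarrow> complex" and x y
  assume h: "bilin T \<and> symmetric_form T \<and> bform_norm T = 1 \<and>
      norm x = 1 \<and> norm y = 1 \<and> \<not> parallel x y \<and> attains_norm_at T x y"
  show "\<exists>F. is_onb cnj F \<and> bmat T F = diag_1_m1 \<and>
         (\<forall>G. is_onb cnj G \<longrightarrow> unitary_mat cnj (bmat T G))"
    using h complex_case by blast
qed

end
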